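(* For every $(y,z)\in\mathbb{R}\times\mathbb{R}$, if $D(y,z)\geq0$ then $N(y,z)>D(y,z)$.
   Context: Fix constants $\mu\in\mathbb{R}$, $\kappa>0$, $\sigma>0$, $\rho>0$, $\beta>0$, $c\geq0$. Let $D_\alpha(x)=\frac{e^{-x^2/4}}{\Gamma(-\alpha)}\int_0^\infty t^{-\alpha-1}e^{-t^2/2-xt}dt$ ($\alpha<0$) and $\psi(x)=e^{\frac{\kappa(x-\mu)^2}{2\sigma^2}}D_{-\rho/\kappa}\big(-\frac{x-\mu}{\sigma}\sqrt{2\kappa}\big)$, the strictly increasing positive solution of $\frac{\sigma^2}{2}u''+\kappa(\mu-x)u'-\rho u=0$. Let $\tilde{R}(x,y)=\frac{\mu\kappa+\rho x-\beta(\rho+2\kappa)y}{\rho(\rho+\kappa)}$. For $k\geq0$, $Q_k(z)=\psi^{(k)}(z)\psi^{(k+2)}(z)-\psi^{(k+1)}(z)^2$, so $Q_0'(z)=\psi(z)\psi'''(z)-\psi'(z)\psi''(z)$. Define $D(y,z)=\psi(z)\big[(\rho+\kappa)(c-\tilde{R}(z,y))Q_1(z)+Q_0'(z)\big]$ and $N(y,z)=Q_0(z)\Big(\frac{\rho+2\kappa}{\rho}\psi'(z)+(\rho+\kappa)(c-\tilde{R}(z,y))\psi''(z)+\psi'(z)\Big)$. *)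

theory Defs
  imports "HOL-Analysis.Analysis"
begin

text \<open>Parabolic cylinder function D_alpha for alpha < 0, via its integral representation
(Lebesgue integral over the open half-line (0, infinity)).\<close>
definition parcyl :: "real \<Rightarrow> real \<Rightarrow> real" where
  "parcyl \<alpha> x = exp (- (x\<^sup>2) / 4) / Gamma (- \<alpha>) *
     (LINT t:{0<..}|lborel. t powr (- \<alpha> - 1) * exp (- (t\<^sup>2) / 2 - x * t))"

definition psi :: "real \<Rightarrow> real \<Rightarrow> real \<Rightarrow> real \<Rightarrow> real \<Rightarrow> real" where
  "psi \<mu> \<kappa> \<sigma> \<rho> x = exp (\<kappa> * (x - \<mu>)\<^sup>2 / (2 * \<sigma>\<^sup>2)) *
     parcyl (- \<rho> / \<kappa>) (- (x - \<mu>) / \<sigma> * sqrt (2 * \<kappa>))"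

definition psid :: "real \<Rightarrow> real \<Rightarrow> real \<Rightarrow> real \<Rightarrow> nat \<Rightarrow> real \<Rightarrow> real" where
  "psid \<mu> \<kappa> \<sigma> \<rho> k = (deriv ^^ k) (psi \<mu> \<kappa> \<sigma> \<rho>)"

definition Rt :: "real \<Rightarrow> real \<Rightarrow> real \<Rightarrow> real \<Rightarrow> real \<Rightarrow> real \<Rightarrow> real" where
  "Rt \<mu> \<kappa> \<rho> \<beta> x y = (\<mu> * \<kappa> + \<rho> * x - \<beta> * (\<rho> + 2 * \<kappa>) * y) / (\<rho> * (\<rho> + \<kappa>))"

definition Qk :: "real \<Rightarrow> real \<Rightarrow> real \<Rightarrow> real \<Rightarrow> nat \<Rightarrow> real \<Rightarrow> real" where
  "Qk \<mu> \<kappa> \<sigma> \<rho> k z = psid \<mu> \<kappa> \<sigma> \<rho> k z * psid \<mu> \<kappa> \<sigma> \<rho> (k + 2) z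
     - (psid \<mu> \<kappa> \<sigma> \<rho> (k + 1) z)\<^sup>2"

text \<open>Q_0'(z) = psi psi''' - psi' psi''.\<close>
definition Q0d :: "real \<Rightarrow> real \<Rightarrow> real \<Rightarrow> real \<Rightarrow> real \<Rightarrow> real" where
  "Q0d \<mu> \<kappa> \<sigma> \<rho> z = psid \<mu> \<kappa> \<sigma> \<rho> 0 z * psid \<mu> \<kappa> \<sigma> \<rho> 3 z
     - psid \<mu> \<kappa> \<sigma> \<rho> 1 z * psid \<mu> \<kappa> \<sigma> \<rho> 2 z"

definition DD :: "real \<Rightarrow> real \<Rightarrow> real \<Rightarrow> real \<Rightarrow> real \<Rightarrow> real \<Rightarrow> real \<Rightarrow> real \<Rightarrow> real" where
  "DD \<mu> \<kappa> \<sigma> \<rho> \<beta> c y z = psi \<mu> \<kappa> \<sigma> \<rho> z *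
     ((\<rho> + \<kappa>) * (c - Rt \<mu> \<kappa> \<rho> \<beta> z y) * Qk \<mu> \<kappa> \<sigma> \<rho> 1 z + Q0d \<mu> \<kappa> \<sigma> \<rho> z)"

definition NN :: "real \<Rightarrow> real \<Rightarrow> real \<Rightarrow> real \<Rightarrow> real \<Rightarrow> real \<Rightarrow> real \<Rightarrow> real \<Rightarrow> real" where
  "NN \<mu> \<kappa> \<sigma> \<rho> \<beta> c y z = Qk \<mu> \<kappa> \<sigma> \<rho> 0 z *
     ((\<rho> + 2 * \<kappa>) / \<rho> * psid \<mu> \<kappa> \<sigma> \<rho> 1 z
      + (\<rho> + \<kappa>) * (c - Rt \<mu> \<kappa> \<rho> \<beta> z y) * psid \<mu> \<kappa> \<sigma> \<rho> 2 z
      + psid \<mu> \<kappa> \<sigma> \<rho> 1 z)"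

end

theory Submission
  imports Defs "HOL-Real_Asymp.Real_Asymp" "HOL-Computational_Algebra.Polynomial"
begin


definition W :: "real \<Rightarrow> real \<Rightarrow> real \<Rightarrow> real" where
  "W a b t = t powr a * exp (b * t - t\<^sup>2 / 2)"

lemma W_bound:
  assumes "t > 0"
  shows "W a b t \<le> exp ((b+1)\<^sup>2/2) * (t powr a / exp t)"
proof -
  have "b * t - t\<^sup>2 / 2 \<le> (b+1)\<^sup>2/2 + (- t)"
    using zero_le_power2[of "t - (b+1)"] by (simp add: power2_eq_square algebra_simps)
  hence "exp (b * t - t\<^sup>2 / 2) \<le> exp ((b+1)\<^sup>2/2) * exp (-t)"
    by (simp add: exp_add[symmetric])
  hence "t powr a * exp (b * t - t\<^sup>2 / 2) \<le> t powr a * (exp ((b+1)\<^sup>2/2) * exp (-t))"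
    by (intro mult_left_mono) auto
  thus ?thesis by (simp add: W_def exp_minus field_simps)
qed

lemma gamma_set_integrable:
  assumes "a > -1"
  shows "set_integrable lborel {0<..} (\<lambda>t::real. t powr a / exp t)"
proof -
  have "((\<lambda>t. t powr ((a+1) - 1) / exp t) has_integral Gamma (a+1)) {0..}"
    using Gamma_integral_real[of "a+1"] assms by simp
  hence "(\<lambda>t::real. t powr a / exp t) integrable_on {0..}" by (auto simp: has_integral_integrable_integral)
  hence "(\<lambda>t::real. t powr a / exp t) integrable_on {0<..}"
    by (rule integrable_spike_set) (auto intro: negligible_subset[of "{0}"])
  hence "(\<lambda>t::real. t powr a / exp t) absolutely_integrable_on {0<..}"
    by (rule nonnegative_absolutely_integrable_1) auto
  hence "set_integrable lebesgue {0<..} (\<lambda>t::real. t powr a / exp t)"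
    by (simp add: absolutely_integrable_on_def)
  thus ?thesis unfolding set_integrable_def
    by (subst (asm) integrable_completion) auto
qed



lemma deriv_integral:
  fixes f :: "real \<Rightarrow> real \<Rightarrow> real"
  assumes int: "\<And>\<beta>. integrable lborel (f \<beta>)"
  and der: "\<And>t. ((\<lambda>\<beta>. f \<beta> t) has_real_derivative f' t) (at b)"
  and g: "integrable lborel g"
  and meas: "f' \<in> borel_measurable lborel"
  and bnd: "\<And>t h. \<bar>h\<bar> \<le> 1 \<Longrightarrow> \<bar>f (b+h) t - f b t\<bar> \<le> \<bar>h\<bar> * g t"
  shows "((\<lambda>\<beta>. integral\<^sup>L lborel (f \<beta>)) has_real_derivative integral\<^sup>L lborel f') (at b)"
  unfolding DERIV_def tendsto_at_iff_sequentially comp_def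
proof (intro allI impI)
  fix X :: "nat \<Rightarrow> real"
  assume X0: "\<forall>i. X i \<in> UNIV - {0}" and X: "X \<longlonglongrightarrow> 0"
  have "(\<lambda>n. \<bar>X n\<bar>) \<longlonglongrightarrow> 0" using tendsto_rabs_zero[OF X] .
  hence "eventually (\<lambda>n. \<bar>X n\<bar> < 1) sequentially"
    by (rule order_tendstoD(2)) simp
  then obtain N where N: "\<And>n. n \<ge> N \<Longrightarrow> \<bar>X n\<bar> < 1" by (auto simp: eventually_sequentially)
  define s where "s i t = (f (b + X (i + N)) t - f b t) / X (i + N)" for i t
  have eq: "(integral\<^sup>L lborel (f (b + X i)) - integral\<^sup>L lborel (f b)) / X i
      = integral\<^sup>L lborel (\<lambda>t. (f (b + X i) t - f b t) / X i)" for i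
    using int by (simp add: integral_diff)
  have "(\<lambda>i. integral\<^sup>L lborel (s i)) \<longlonglongrightarrow> integral\<^sup>L lborel f'"
  proof (rule integral_dominated_convergence[where w = g])
    show "f' \<in> borel_measurable lborel" by (rule meas)
    show "s i \<in> borel_measurable lborel" for i
      unfolding s_def using int by (intro borel_measurable_divide borel_measurable_diff) auto
    show "integrable lborel g" by (rule g)
    show "AE t in lborel. (\<lambda>i. s i t) \<longlonglongrightarrow> f' t"
    proof (intro AE_I2)
      fix t
      have "((\<lambda>h. (f (b + h) t - f b t) / h) \<longlongrightarrow> f' t) (at 0)"
        using der[of t] unfolding DERIV_def .
      hence "\<forall>Y. (\<forall>i. Y i \<in> UNIV - {0}) \<longrightarrow> Y \<longlonglongrightarrow> 0 \<longrightarrow> ((\<lambda>i. (f (b + Y i) t - f b t) / Y i) \<longlonglongrightarrow> f' t)"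
        unfolding tendsto_at_iff_sequentially comp_def .
      moreover have "(\<lambda>i. X (i + N)) \<longlonglongrightarrow> 0" using X by (rule LIMSEQ_ignore_initial_segment)
      ultimately show "(\<lambda>i. s i t) \<longlonglongrightarrow> f' t" using X0 unfolding s_def by auto
    qed
    show "AE t in lborel. norm (s i t) \<le> g t" for i
    proof (intro AE_I2)
      fix t
      have h1: "\<bar>X (i+N)\<bar> \<le> 1" using N[of "i+N"] by simp
      have h0: "X (i+N) \<noteq> 0" using X0 by auto
      have "\<bar>f (b + X (i+N)) t - f b t\<bar> \<le> \<bar>X (i+N)\<bar> * g t" by (rule bnd[OF h1])
      thus "norm (s i t) \<le> g t" using h0 unfolding s_def
        by (simp add: abs_divide divide_le_eq mult.commute)
    qed
  qed
  hence "(\<lambda>i. (integral\<^sup>L lborel (f (b + X (i + N))) - integral\<^sup>L lborel (f b)) / X (i + N)) \<longlonglongrightarrow> integral\<^sup>L lborel f'"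
    unfolding s_def eq .
  thus "(\<lambda>i. (integral\<^sup>L lborel (f (b + X i)) - integral\<^sup>L lborel (f b)) / X i) \<longlonglongrightarrow> integral\<^sup>L lborel f'"
    by (rule LIMSEQ_offset)
qed



lemma W_meas[measurable]: "W a b \<in> borel_measurable borel"
  unfolding W_def by measurable

lemma W_int:
  assumes "a > -1"
  shows "set_integrable lborel {0<..} (W a b)"
proof (rule set_integrable_bound[OF set_integrable_mult_right[OF gamma_set_integrable[OF assms]]])
  show "set_borel_measurable lborel {0<..} (W a b)"
    unfolding set_borel_measurable_def by measurable
  show "AE x in lborel. x \<in> {0<..} \<longrightarrow> norm (W a b x) \<le> norm (exp ((b+1)\<^sup>2/2) * (x powr a / exp x))"
    using W_bound by (auto simp: W_def)
qed

lemma abs_exp_sub_one: "\<bar>exp (x::real) - 1\<bar> \<le> \<bar>x\<bar> * exp \<bar>x\<bar>"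
proof (cases "x \<ge> 0")
  case True
  have "1 - x \<le> exp (-x)" using exp_ge_add_one_self[of "-x"] by simp
  hence "exp x * (1 - x) \<le> exp x * exp (-x)" by (intro mult_left_mono) auto
  hence "exp x - 1 \<le> x * exp x" by (simp add: exp_minus algebra_simps)
  moreover have "exp x \<ge> 1" using True by simp
  ultimately show ?thesis using True by simp
next
  case False
  have "1 + x \<le> exp x" using exp_ge_add_one_self[of x] by simp
  moreover have "exp x \<le> 1" using False by simp
  moreover have "1 \<le> exp \<bar>x\<bar>" by simp
  moreover have "\<bar>exp x - 1\<bar> = 1 - exp x" using \<open>exp x \<le> 1\<close> by simp
  moreover have "\<bar>x\<bar> = - x" using False by simp
  ultimately have "\<bar>exp x - 1\<bar> \<le> \<bar>x\<bar>" by linarith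
  also have "\<dots> \<le> \<bar>x\<bar> * exp \<bar>x\<bar>" using \<open>1 \<le> exp \<bar>x\<bar>\<close> by (simp add: mult_le_cancel_left1)
  finally show ?thesis .
qed

definition Mo :: "real \<Rightarrow> real \<Rightarrow> real" where
  "Mo a b = (LINT t:{0<..}|lborel. W a b t)"

lemma Mo_alt: "Mo a b = integral\<^sup>L lborel (\<lambda>t. indicator {0<..} t * W a b t)"
  unfolding Mo_def set_lebesgue_integral_def by simp

lemma W_deriv:
  assumes "t > 0"
  shows "((\<lambda>\<beta>. W a \<beta> t) has_real_derivative W (a+1) b t) (at b)"
proof -
  have "((\<lambda>\<beta>. t powr a * exp (\<beta> * t - t\<^sup>2 / 2)) has_real_derivative t powr a * (exp (b * t - t\<^sup>2 / 2) * t)) (at b)"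
    by (auto intro!: derivative_eq_intros)
  moreover have "t powr a * (exp (b * t - t\<^sup>2 / 2) * t) = W (a+1) b t"
    using assms by (simp add: W_def powr_add)
  ultimately show ?thesis unfolding W_def by simp
qed

lemma W_lip:
  assumes "t > 0" "\<bar>h\<bar> \<le> 1"
  shows "\<bar>W a (b+h) t - W a b t\<bar> \<le> \<bar>h\<bar> * W (a+1) (b+1) t"
proof -
  have e: "exp ((b+h) * t - t\<^sup>2/2) = exp (b*t - t\<^sup>2/2) * exp (h*t)"
    by (simp add: exp_add[symmetric] algebra_simps)
  have e2: "exp ((b+1) * t - t\<^sup>2/2) = exp (b*t - t\<^sup>2/2) * exp t"
    by (simp add: exp_add[symmetric] algebra_simps)
  have "W a (b+h) t - W a b t = t powr a * exp (b*t - t\<^sup>2/2) * (exp (h*t) - 1)"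
    unfolding W_def e by (simp add: algebra_simps)
  hence "\<bar>W a (b+h) t - W a b t\<bar> = t powr a * exp (b*t - t\<^sup>2/2) * \<bar>exp (h*t) - 1\<bar>"
    by (simp add: abs_mult)
  also have "\<dots> \<le> t powr a * exp (b*t - t\<^sup>2/2) * (\<bar>h\<bar> * t * exp t)"
  proof (intro mult_left_mono)
    have "\<bar>h*t\<bar> \<le> t" using assms by (simp add: abs_mult mult_le_cancel_right1)
    hence "exp \<bar>h*t\<bar> \<le> exp t" by simp
    hence "\<bar>h*t\<bar> * exp \<bar>h*t\<bar> \<le> \<bar>h\<bar> * t * exp t"
      using assms by (simp add: abs_mult mult_left_mono)
    thus "\<bar>exp (h*t) - 1\<bar> \<le> \<bar>h\<bar> * t * exp t" using abs_exp_sub_one[of "h*t"] by linarith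
  qed auto
  also have "\<dots> = \<bar>h\<bar> * W (a+1) (b+1) t"
    unfolding W_def e2 using assms by (simp add: powr_add algebra_simps)
  finally show ?thesis .
qed

lemma Mo_deriv:
  assumes "a > -1"
  shows "(Mo a has_real_derivative Mo (a+1) b) (at b)"
proof -
  have "((\<lambda>\<beta>. integral\<^sup>L lborel (\<lambda>t. indicator {0<..} t * W a \<beta> t)) has_real_derivative
      integral\<^sup>L lborel (\<lambda>t. indicator {0<..} t * W (a+1) b t)) (at b)"
  proof (rule deriv_integral[where g = "\<lambda>t. indicator {0<..} t * W (a+1) (b+1) t"])
    show "integrable lborel (\<lambda>t. indicator {0<..} t * W a \<beta> t)" for \<beta>
      using W_int[OF assms, of \<beta>] unfolding set_integrable_def by simp
    show "integrable lborel (\<lambda>t. indicator {0<..} t * W (a+1) (b+1) t)"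
      using W_int[of "a+1" "b+1"] assms unfolding set_integrable_def by simp
    show "(\<lambda>t. indicator {0<..} t * W (a+1) b t) \<in> borel_measurable lborel" by measurable
    show "((\<lambda>\<beta>. indicator {0<..} t * W a \<beta> t) has_real_derivative indicator {0<..} t * W (a+1) b t) (at b)" for t
      by (cases "t > 0") (auto intro: W_deriv)
    show "\<bar>indicator {0<..} t * W a (b + h) t - indicator {0<..} t * W a b t\<bar> \<le> \<bar>h\<bar> * (indicator {0<..} t * W (a+1) (b+1) t)"
      if "\<bar>h\<bar> \<le> 1" for t h
      using W_lip[of t h a b] that by (cases "t > 0") auto
  qed
  thus ?thesis unfolding Mo_alt[abs_def] by (simp add: Mo_alt)
qed



lemma W_lim_top: "((\<lambda>t. W a b t) \<longlongrightarrow> 0) at_top"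
  unfolding W_def by real_asymp

lemma W_lim_0:
  assumes "a > 0"
  shows "((\<lambda>t. W a b t) \<longlongrightarrow> 0) (at_right 0)"
proof -
  have "((\<lambda>t. t powr a * exp (b * t - t\<^sup>2 / 2)) \<longlongrightarrow> 0 * exp (b * 0 - 0\<^sup>2/2)) (at_right 0)"
    using assms by (intro tendsto_intros tendsto_powr'[where a=0, simplified] ) (auto intro: tendsto_intros simp: eventually_at_right_field)
  thus ?thesis unfolding W_def by simp
qed



lemma Mo_IBP:
  assumes "a > 0"
  shows "Mo (a+1) b = b * Mo a b + a * Mo (a-1) b"
proof -
  define f where "f t = a * W (a-1) b t + b * W a b t - W (a+1) b t" for t
  have i1: "set_integrable lborel {0<..} (W (a-1) b)" using W_int assms by simp
  have i2: "set_integrable lborel {0<..} (W a b)" using W_int assms by simp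
  have i3: "set_integrable lborel {0<..} (W (a+1) b)" using W_int assms by simp
  have fint: "set_integrable lborel {0<..} f"
    unfolding f_def using i1 i2 i3 by (intro set_integral_diff set_integral_add set_integrable_mult_right) auto
  have "(LBINT x=0..\<infinity>. f x) = 0 - 0"
  proof (rule interval_integral_FTC_integrable[where F = "W a b"])
    show "(0::ereal) < \<infinity>" by simp
    fix x :: real assume x: "0 < ereal x" "ereal x < \<infinity>"
    hence x0: "x > 0" by simp
    have "((\<lambda>t. t powr a * exp (b * t - t\<^sup>2 / 2)) has_real_derivative
        a * x powr (a - 1) * exp (b * x - x\<^sup>2 / 2) + x powr a * (exp (b * x - x\<^sup>2 / 2) * (b - 2 * x / 2))) (at x)"
      using x0 by (auto intro!: derivative_eq_intros)
    moreover have "a * x powr (a - 1) * exp (b * x - x\<^sup>2 / 2) + x powr a * (exp (b * x - x\<^sup>2 / 2) * (b - 2 * x / 2)) = f x"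
      unfolding f_def W_def using x0 by (simp add: powr_add algebra_simps)
    ultimately show "(W a b has_vector_derivative f x) (at x)"
      unfolding W_def[abs_def] by (simp add: has_real_derivative_iff_has_vector_derivative)
    show "isCont f x" unfolding f_def W_def using x0 by (intro continuous_intros) auto
  next
    show "set_integrable lborel (einterval 0 \<infinity>) f" using fint by (simp add: zero_ereal_def)
    show "((W a b \<circ> real_of_ereal) \<longlongrightarrow> 0) (at_right 0)"
      using W_lim_0[OF assms, of b] by (simp add: zero_ereal_def ereal_tendsto_simps)
    show "((W a b \<circ> real_of_ereal) \<longlongrightarrow> 0) (at_left \<infinity>)"
      using W_lim_top[of a b] by (simp add: ereal_tendsto_simps)
  qed
  hence "(LINT x:{0<..}|lborel. f x) = 0"
    by (simp add: interval_lebesgue_integral_def zero_ereal_def)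
  moreover have "(LINT x:{0<..}|lborel. f x) = a * Mo (a-1) b + b * Mo a b - Mo (a+1) b"
    unfolding f_def Mo_def using i1 i2 i3
    by (simp add: set_integral_diff set_integral_add set_integrable_mult_right)
  ultimately show ?thesis by simp
qed



lemma quad_roots_finite:
  fixes \<alpha> \<beta> \<gamma> :: real
  assumes "\<not> (\<alpha> = 0 \<and> \<beta> = 0 \<and> \<gamma> = 0)"
  shows "finite {x. \<alpha> + \<beta> * x + \<gamma> * x\<^sup>2 = 0}"
proof -
  have "[:\<alpha>, \<beta>, \<gamma>:] \<noteq> 0" using assms by auto
  hence "finite {x. poly [:\<alpha>, \<beta>, \<gamma>:] x = 0}" by (rule poly_roots_finite)
  moreover have "poly [:\<alpha>, \<beta>, \<gamma>:] x = \<alpha> + \<beta> * x + \<gamma> * x\<^sup>2" for x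
    by (simp add: algebra_simps power2_eq_square)
  ultimately show ?thesis by (simp add: add.assoc)
qed

lemma W_pos: "t > 0 \<Longrightarrow> W a b t > 0"
  unfolding W_def by simp

lemma W_shift: "t > 0 \<Longrightarrow> W (a + real k) b t = t ^ k * W a b t"
  unfolding W_def by (simp add: powr_add powr_realpow)

lemma quad_pos:
  fixes \<alpha> \<beta> \<gamma> :: real
  assumes a: "a > -1" and nz: "\<not> (\<alpha> = 0 \<and> \<beta> = 0 \<and> \<gamma> = 0)"
  shows "\<alpha>\<^sup>2 * Mo a b + 2*\<alpha>*\<beta> * Mo (a+1) b + (\<beta>\<^sup>2 + 2*\<alpha>*\<gamma>) * Mo (a+2) b
     + 2*\<beta>*\<gamma> * Mo (a+3) b + \<gamma>\<^sup>2 * Mo (a+4) b > 0"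
proof -
  define F where "F k t = indicator {0<..} t * W (a + real k) b t" for k t
  have Fint: "integrable lborel (F k)" for k
    using W_int[of "a + real k" b] a unfolding F_def set_integrable_def by simp
  have FMo: "integral\<^sup>L lborel (F k) = Mo (a + real k) b" for k
    unfolding F_def Mo_alt ..
  define g where "g t = indicator {0<..} t * ((\<alpha> + \<beta> * t + \<gamma> * t\<^sup>2)\<^sup>2 * W a b t)" for t
  have g_eq: "g = (\<lambda>t. \<alpha>\<^sup>2 * F 0 t + 2*\<alpha>*\<beta> * F 1 t + (\<beta>\<^sup>2 + 2*\<alpha>*\<gamma>) * F 2 t
     + 2*\<beta>*\<gamma> * F 3 t + \<gamma>\<^sup>2 * F 4 t)"
  proof
    fix t
    show "g t = \<alpha>\<^sup>2 * F 0 t + 2*\<alpha>*\<beta> * F 1 t + (\<beta>\<^sup>2 + 2*\<alpha>*\<gamma>) * F 2 t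
     + 2*\<beta>*\<gamma> * F 3 t + \<gamma>\<^sup>2 * F 4 t"
    proof (cases "t > 0")
      case True
      have s: "W (a + real k) b t = t ^ k * W a b t" for k using W_shift[OF True] .
      show ?thesis unfolding g_def F_def using True s[of 1] s[of 2] s[of 3] s[of 4]
        by (simp add: power2_eq_square power3_eq_cube power4_eq_xxxx algebra_simps)
    qed (simp add: g_def F_def)
  qed
  have gint: "integrable lborel g" unfolding g_eq using Fint by simp
  have gI: "integral\<^sup>L lborel g = \<alpha>\<^sup>2 * Mo a b + 2*\<alpha>*\<beta> * Mo (a+1) b + (\<beta>\<^sup>2 + 2*\<alpha>*\<gamma>) * Mo (a+2) b
     + 2*\<beta>*\<gamma> * Mo (a+3) b + \<gamma>\<^sup>2 * Mo (a+4) b"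
  proof -
    have "integral\<^sup>L lborel (F 0) = Mo a b" "integral\<^sup>L lborel (F 1) = Mo (a+1) b"
      "integral\<^sup>L lborel (F 2) = Mo (a+2) b" "integral\<^sup>L lborel (F 3) = Mo (a+3) b"
      "integral\<^sup>L lborel (F 4) = Mo (a+4) b"
      using FMo[of 0] FMo[of 1] FMo[of 2] FMo[of 3] FMo[of 4] by simp_all
    thus ?thesis unfolding g_eq using Fint by simp
  qed
  have gnn: "AE t in lborel. 0 \<le> g t"
    using W_pos by (auto simp: g_def less_imp_le indicator_def)
  have "integral\<^sup>L lborel g \<noteq> 0"
  proof
    assume "integral\<^sup>L lborel g = 0"
    hence AE0: "AE t in lborel. g t = 0" using integral_nonneg_eq_0_iff_AE[OF gint gnn] by simp
    define R where "R = {x. \<alpha> + \<beta> * x + \<gamma> * x\<^sup>2 = 0}"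
    have "finite R" unfolding R_def using quad_roots_finite[OF nz] .
    hence "AE t in lborel. t \<notin> R" by (intro AE_not_in finite_imp_null_set_lborel)
    with AE0 have "AE t in lborel. t \<notin> {0<..<1::real}"
    proof eventually_elim
      case (elim t)
      show ?case
      proof
        assume t: "t \<in> {0<..<1}"
        hence "\<alpha> + \<beta> * t + \<gamma> * t\<^sup>2 \<noteq> 0" using elim R_def by auto
        hence "g t > 0" using t W_pos[of t a b] by (simp add: g_def)
        thus False using elim by simp
      qed
    qed
    hence "emeasure lborel {0<..<1::real} = 0"
      by (subst (asm) AE_iff_measurable[where N="{0<..<1}"]) auto
    thus False by simp
  qed
  moreover have "integral\<^sup>L lborel g \<ge> 0" using gnn by (rule integral_nonneg_AE)
  ultimately show ?thesis using gI by linarith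
qed



lemma gram:
  fixes a b :: real
  assumes a: "a > -1"
  defines "m0 \<equiv> Mo a b" and "m1 \<equiv> Mo (a+1) b" and "m2 \<equiv> Mo (a+2) b"
    and "m3 \<equiv> Mo (a+3) b" and "m4 \<equiv> Mo (a+4) b"
  shows "m0 > 0" and "m0 * m2 - m1\<^sup>2 > 0"
    and "(m0 * m2 - m1\<^sup>2) * (m0 * m4 - m2\<^sup>2) - (m0 * m3 - m1 * m2)\<^sup>2 > 0"
proof -
  have Q: "\<alpha>\<^sup>2 * m0 + 2*\<alpha>*\<beta> * m1 + (\<beta>\<^sup>2 + 2*\<alpha>*\<gamma>) * m2 + 2*\<beta>*\<gamma> * m3 + \<gamma>\<^sup>2 * m4 > 0"
    if "\<not> (\<alpha> = 0 \<and> \<beta> = 0 \<and> \<gamma> = 0)" for \<alpha> \<beta> \<gamma>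
    using quad_pos[OF a that, of b] unfolding m0_def m1_def m2_def m3_def m4_def by simp
  show m0: "m0 > 0" using Q[of 1 0 0] by simp
  have "(-m1)\<^sup>2 * m0 + 2*(-m1)*m0 * m1 + (m0\<^sup>2 + 2*(-m1)*0) * m2 + 2*m0*0 * m3 + 0\<^sup>2 * m4 > 0"
    using m0 by (intro Q) simp
  hence "m0 * (m0 * m2 - m1\<^sup>2) > 0" by (simp add: power2_eq_square algebra_simps)
  thus Q0: "m0 * m2 - m1\<^sup>2 > 0" using m0 by (simp add: zero_less_mult_iff)
  define q0 where "q0 = m0 * m2 - m1\<^sup>2"
  define q0' where "q0' = m0 * m3 - m1 * m2"
  have "(q0' * m1 - q0 * m2)\<^sup>2 * m0 + 2*(q0' * m1 - q0 * m2)*(- q0' * m0) * m1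
        + ((- q0' * m0)\<^sup>2 + 2*(q0' * m1 - q0 * m2)*(q0 * m0)) * m2
        + 2*(- q0' * m0)*(q0 * m0) * m3 + (q0 * m0)\<^sup>2 * m4 > 0"
    using m0 Q0 by (intro Q) (simp add: q0_def)
  moreover have "(q0' * m1 - q0 * m2)\<^sup>2 * m0 + 2*(q0' * m1 - q0 * m2)*(- q0' * m0) * m1
        + ((- q0' * m0)\<^sup>2 + 2*(q0' * m1 - q0 * m2)*(q0 * m0)) * m2
        + 2*(- q0' * m0)*(q0 * m0) * m3 + (q0 * m0)\<^sup>2 * m4
        = m0 * q0 * (q0 * (m0 * m4 - m2\<^sup>2) - q0'\<^sup>2)"
    unfolding q0_def q0'_def by (simp add: power2_eq_square algebra_simps)
  ultimately have "m0 * q0 * (q0 * (m0 * m4 - m2\<^sup>2) - q0'\<^sup>2) > 0" by simp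
  moreover have "m0 * q0 > 0" using m0 Q0 unfolding q0_def by simp
  ultimately have "q0 * (m0 * m4 - m2\<^sup>2) - q0'\<^sup>2 > 0"
    by (metis zero_less_mult_iff not_less_iff_gr_or_eq)
  thus "(m0 * m2 - m1\<^sup>2) * (m0 * m4 - m2\<^sup>2) - (m0 * m3 - m1 * m2)\<^sup>2 > 0"
    unfolding q0_def q0'_def .
qed



lemma final_alg:
  fixes m0 m1 m2 m3 m4 m5 s \<nu> L u A :: real
  assumes nu: "\<nu> > 0" and L: "L > 0" and u: "u > 0"
    and r2: "m2 = s * m1 + \<nu> * m0" and r3: "m3 = s * m2 + (\<nu>+1) * m1"
    and r4: "m4 = s * m3 + (\<nu>+2) * m2" and r5: "m5 = s * m4 + (\<nu>+3) * m3"
    and m0: "m0 > 0" and m1: "m1 > 0" and q0: "m0 * m2 - m1\<^sup>2 > 0" and q1: "m1 * m3 - m2\<^sup>2 > 0"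
    and g0: "(m0 * m2 - m1\<^sup>2) * (m0 * m4 - m2\<^sup>2) - (m0 * m3 - m1 * m2)\<^sup>2 > 0"
    and g1: "(m1 * m3 - m2\<^sup>2) * (m1 * m5 - m3\<^sup>2) - (m1 * m4 - m2 * m3)\<^sup>2 > 0"
    and D: "(u*m0) * (A * ((L*u*m1) * (L^3*u*m3) - (L^2*u*m2)\<^sup>2) + ((u*m0) * (L^3*u*m3) - (L*u*m1) * (L^2*u*m2))) \<ge> 0"
  shows "((u*m0) * (L^2*u*m2) - (L*u*m1)\<^sup>2) * ((1 + 2/\<nu>) * (L*u*m1) + A * (L^2*u*m2) + (L*u*m1))
       > (u*m0) * (A * ((L*u*m1) * (L^3*u*m3) - (L^2*u*m2)\<^sup>2) + ((u*m0) * (L^3*u*m3) - (L*u*m1) * (L^2*u*m2)))"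
proof -
  define q0 where "q0 = m0 * m2 - m1\<^sup>2"
  define q1 where "q1 = m1 * m3 - m2\<^sup>2"
  define q0d where "q0d = m0 * m3 - m1 * m2"
  define B where "B = A * L"
  define coef where "coef = q0 * m2 - m0 * q1"
  define Z where "Z = (2 + 2/\<nu>) * m1 * q1 - m2 * q0d"
  have k: "L^3 * u^3 > 0" using L u by simp
  have Deq: "(u*m0) * (A * ((L*u*m1) * (L^3*u*m3) - (L^2*u*m2)\<^sup>2) + ((u*m0) * (L^3*u*m3) - (L*u*m1) * (L^2*u*m2)))
     = L^3 * u^3 * (m0 * (B * q1 + q0d))"
    unfolding q1_def q0d_def B_def by (simp add: power2_eq_square power3_eq_cube algebra_simps)
  have Neq: "((u*m0) * (L^2*u*m2) - (L*u*m1)\<^sup>2) * ((1 + 2/\<nu>) * (L*u*m1) + A * (L^2*u*m2) + (L*u*m1))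
     = L^3 * u^3 * (q0 * ((2 + 2/\<nu>) * m1 + B * m2))"
    unfolding q0_def B_def using nu by (simp add: power2_eq_square power3_eq_cube field_simps)
  have "m0 * (B * q1 + q0d) \<ge> 0" using D k unfolding Deq by (simp add: zero_le_mult_iff)
  hence Bq: "B * q1 + q0d \<ge> 0" using m0 by (simp add: zero_le_mult_iff)
  have "coef * m0 = (m0 * m2 - m1\<^sup>2) * (m0 * m4 - m2\<^sup>2) - (m0 * m3 - m1 * m2)\<^sup>2"
    unfolding coef_def q0_def q1_def using r2 r3 r4
    by (simp add: power2_eq_square algebra_simps)
  hence "coef * m0 > 0" using g0 by simp
  hence coef: "coef > 0" using m0 by (simp add: zero_less_mult_iff)
  have "\<nu> * Z * m1 = (m1 * m3 - m2\<^sup>2) * (m1 * m5 - m3\<^sup>2) - (m1 * m4 - m2 * m3)\<^sup>2"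
    unfolding Z_def q1_def q0d_def using r2 r3 r4 r5 nu
    by (simp add: power2_eq_square field_simps)
  hence "\<nu> * Z * m1 > 0" using g1 by simp
  hence Z: "Z > 0" using m1 nu by (simp add: zero_less_mult_iff)
  have "q1 * (q0 * ((2 + 2/\<nu>) * m1 + B * m2) - m0 * (B * q1 + q0d))
      = q0 * Z + coef * (B * q1 + q0d)"
    unfolding Z_def coef_def by (simp add: algebra_simps)
  also have "\<dots> > 0" using q0 Z coef Bq unfolding q0_def
    by (simp add: add_pos_nonneg)
  finally have "q1 * (q0 * ((2 + 2/\<nu>) * m1 + B * m2) - m0 * (B * q1 + q0d)) > 0" .
  hence "q0 * ((2 + 2/\<nu>) * m1 + B * m2) - m0 * (B * q1 + q0d) > 0"
    using q1 unfolding q1_def by (simp add: zero_less_mult_iff)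
  hence "L^3 * u^3 * (q0 * ((2 + 2/\<nu>) * m1 + B * m2)) > L^3 * u^3 * (m0 * (B * q1 + q0d))"
    using k by (intro mult_strict_left_mono) simp_all
  thus ?thesis unfolding Neq Deq .
qed



lemma gram_idx:
  fixes \<nu> b :: real
  assumes "\<nu> > 0"
  defines "m \<equiv> \<lambda>k::nat. Mo (\<nu> - 1 + real k) b"
  shows "m i > 0" "m i * m (i+2) - (m (i+1))\<^sup>2 > 0"
    "(m i * m (i+2) - (m (i+1))\<^sup>2) * (m i * m (i+4) - (m (i+2))\<^sup>2) - (m i * m (i+3) - m (i+1) * m (i+2))\<^sup>2 > 0"
proof -
  let ?a = "\<nu> - 1 + real i"
  have a: "?a > -1" using assms by simp
  have e: "m (i + j) = Mo (?a + real j) b" for j unfolding m_def by (simp add: algebra_simps)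
  have e0: "m i = Mo ?a b" unfolding m_def ..
  have e1: "m (i+1) = Mo (?a + 1) b" using e[of 1] by simp
  have e2: "m (i+2) = Mo (?a + 2) b" using e[of 2] by simp
  have e3: "m (i+3) = Mo (?a + 3) b" using e[of 3] by simp
  have e4: "m (i+4) = Mo (?a + 4) b" using e[of 4] by simp
  show "m i > 0" "m i * m (i+2) - (m (i+1))\<^sup>2 > 0"
    "(m i * m (i+2) - (m (i+1))\<^sup>2) * (m i * m (i+4) - (m (i+2))\<^sup>2) - (m i * m (i+3) - m (i+1) * m (i+2))\<^sup>2 > 0"
    unfolding e0 e1 e2 e3 e4 using gram[OF a, of b] by simp_all
qed

lemma Mo_rec:
  fixes \<nu> b :: real
  assumes "\<nu> > 0"
  defines "m \<equiv> \<lambda>k::nat. Mo (\<nu> - 1 + real k) b"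
  shows "m (k+2) = b * m (k+1) + (\<nu> + real k) * m k"
proof -
  have p: "\<nu> + real k > 0" using assms by simp
  have "m (k+2) = Mo ((\<nu> + real k) + 1) b" unfolding m_def by (simp add: algebra_simps)
  moreover have "m (k+1) = Mo (\<nu> + real k) b" unfolding m_def by (simp add: algebra_simps)
  moreover have "m k = Mo ((\<nu> + real k) - 1) b" unfolding m_def by (simp add: algebra_simps)
  ultimately show ?thesis using Mo_IBP[OF p, of b] by simp
qed

lemma psi_eq:
  assumes k: "\<kappa> > 0" and s: "\<sigma> > 0" and r: "\<rho> > 0"
  shows "psi \<mu> \<kappa> \<sigma> \<rho> x = Mo (\<rho>/\<kappa> - 1) (sqrt (2*\<kappa>)/\<sigma> * (x - \<mu>)) / Gamma (\<rho>/\<kappa>)"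
proof -
  define u where "u = - (x - \<mu>) / \<sigma> * sqrt (2 * \<kappa>)"
  have sq: "(sqrt (2*\<kappa>))\<^sup>2 = 2*\<kappa>" using k by simp
  have u2: "u\<^sup>2 / 4 = \<kappa> * (x - \<mu>)\<^sup>2 / (2 * \<sigma>\<^sup>2)"
  proof -
    have "u\<^sup>2 = ((x - \<mu>) / \<sigma>)\<^sup>2 * (sqrt (2*\<kappa>))\<^sup>2"
      unfolding u_def using s by (simp add: power2_eq_square field_simps)
    also have "\<dots> = (x - \<mu>)\<^sup>2 / \<sigma>\<^sup>2 * (2*\<kappa>)" unfolding sq by (simp add: power_divide)
    finally show ?thesis using s by (simp add: field_simps)
  qed
  have fun_eq: "(\<lambda>t. t powr (- (- \<rho> / \<kappa>) - 1) * exp (- (t\<^sup>2) / 2 - u * t)) = W (\<rho>/\<kappa> - 1) (sqrt (2*\<kappa>)/\<sigma> * (x - \<mu>))"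
    using s by (intro ext) (simp add: W_def u_def field_simps)
  have ex: "exp (\<kappa> * (x - \<mu>)\<^sup>2 / (2 * \<sigma>\<^sup>2)) * exp (- (u\<^sup>2) / 4) = 1"
    using u2 by (simp add: exp_minus[symmetric] exp_add[symmetric])
  have "psi \<mu> \<kappa> \<sigma> \<rho> x = exp (\<kappa> * (x - \<mu>)\<^sup>2 / (2 * \<sigma>\<^sup>2)) * (exp (- (u\<^sup>2) / 4) / Gamma (\<rho>/\<kappa>) *
      (LINT t:{0<..}|lborel. t powr (- (- \<rho> / \<kappa>) - 1) * exp (- (t\<^sup>2) / 2 - u * t)))"
    unfolding psi_def parcyl_def u_def by simp
  also have "\<dots> = Mo (\<rho>/\<kappa> - 1) (sqrt (2*\<kappa>)/\<sigma> * (x - \<mu>)) / Gamma (\<rho>/\<kappa>)"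
    unfolding fun_eq Mo_def[symmetric] using ex by (simp add: field_simps)
  finally show ?thesis .
qed

lemma psid_eq:
  assumes k: "\<kappa> > 0" and s: "\<sigma> > 0" and r: "\<rho> > 0"
  shows "psid \<mu> \<kappa> \<sigma> \<rho> n = (\<lambda>x. (sqrt (2*\<kappa>)/\<sigma>)^n * Mo (\<rho>/\<kappa> - 1 + real n) (sqrt (2*\<kappa>)/\<sigma> * (x - \<mu>)) / Gamma (\<rho>/\<kappa>))"
proof (induction n)
  case 0
  show ?case unfolding psid_def using psi_eq[OF assms] by (auto simp: fun_eq_iff)
next
  case (Suc n)
  define L where "L = sqrt (2*\<kappa>)/\<sigma>"
  define a where "a = \<rho>/\<kappa> - 1 + real n"
  have "\<rho>/\<kappa> + real n > 0" using k r by (intro add_pos_nonneg) auto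
  hence a: "a > -1" unfolding a_def by simp
  have "\<rho>/\<kappa> > 0" using k r by simp
  hence G: "Gamma (\<rho>/\<kappa>) \<noteq> 0" using Gamma_real_pos[of "\<rho>/\<kappa>"] by linarith
  have IH: "psid \<mu> \<kappa> \<sigma> \<rho> n = (\<lambda>x. L^n * Mo a (L * (x - \<mu>)) / Gamma (\<rho>/\<kappa>))"
    using Suc.IH unfolding L_def a_def .
  have "psid \<mu> \<kappa> \<sigma> \<rho> (Suc n) = deriv (psid \<mu> \<kappa> \<sigma> \<rho> n)"
    unfolding psid_def by simp
  also have "\<dots> = (\<lambda>x. L^(Suc n) * Mo (a + 1) (L * (x - \<mu>)) / Gamma (\<rho>/\<kappa>))"
  proof
    fix x
    have d1: "((\<lambda>x. L * (x - \<mu>)) has_real_derivative L) (at x)"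
      by (auto intro!: derivative_eq_intros)
    have "((\<lambda>x. Mo a (L * (x - \<mu>))) has_real_derivative Mo (a+1) (L * (x - \<mu>)) * L) (at x)"
      by (rule DERIV_chain2[OF Mo_deriv[OF a] d1])
    hence "((\<lambda>x. L^n * Mo a (L * (x - \<mu>)) / Gamma (\<rho>/\<kappa>)) has_real_derivative
         L^n * (Mo (a+1) (L * (x - \<mu>)) * L) / Gamma (\<rho>/\<kappa>)) (at x)"
      using G by (auto intro!: derivative_eq_intros)
    hence "deriv (\<lambda>x. L^n * Mo a (L * (x - \<mu>)) / Gamma (\<rho>/\<kappa>)) x = L^n * (Mo (a+1) (L * (x - \<mu>)) * L) / Gamma (\<rho>/\<kappa>)"
      by (rule DERIV_imp_deriv)
    thus "deriv (psid \<mu> \<kappa> \<sigma> \<rho> n) x = L^(Suc n) * Mo (a + 1) (L * (x - \<mu>)) / Gamma (\<rho>/\<kappa>)"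
      unfolding IH by (simp add: algebra_simps)
  qed
  finally show ?case unfolding L_def a_def by (simp add: algebra_simps)
qed



theorem lemmaA2:
  fixes \<mu> \<kappa> \<sigma> \<rho> \<beta> c y z :: real
  assumes "\<kappa> > 0" and "\<sigma> > 0" and "\<rho> > 0" and "\<beta> > 0" and "c \<ge> 0"
    and "DD \<mu> \<kappa> \<sigma> \<rho> \<beta> c y z \<ge> 0"
  shows "NN \<mu> \<kappa> \<sigma> \<rho> \<beta> c y z > DD \<mu> \<kappa> \<sigma> \<rho> \<beta> c y z"
proof -
  note k = assms(1) and sg = assms(2) and r = assms(3)
  define \<nu> where "\<nu> = \<rho>/\<kappa>"
  define L where "L = sqrt (2*\<kappa>)/\<sigma>"
  define s where "s = L * (z - \<mu>)"
  define m where "m = (\<lambda>k::nat. Mo (\<nu> - 1 + real k) s)"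
  define u where "u = 1 / Gamma \<nu>"
  define A where "A = (\<rho> + \<kappa>) * (c - Rt \<mu> \<kappa> \<rho> \<beta> z y)"
  have nu: "\<nu> > 0" unfolding \<nu>_def using k r by simp
  have L: "L > 0" unfolding L_def using k sg by simp
  have u: "u > 0" unfolding u_def using nu by simp
  have pe: "psid \<mu> \<kappa> \<sigma> \<rho> n z = L^n * u * m n" for n
    using psid_eq[OF k sg r, of \<mu> n] unfolding L_def[symmetric] \<nu>_def[symmetric] s_def[symmetric]
    by (simp add: m_def u_def s_def)
  have e0: "psid \<mu> \<kappa> \<sigma> \<rho> 0 z = u * m 0" using pe[of 0] by simp
  have e1: "psid \<mu> \<kappa> \<sigma> \<rho> 1 z = L * u * m 1" using pe[of 1] by simp
  have e2: "psid \<mu> \<kappa> \<sigma> \<rho> 2 z = L^2 * u * m 2" using pe[of 2] by simp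
  have e3: "psid \<mu> \<kappa> \<sigma> \<rho> 3 z = L^3 * u * m 3" using pe[of 3] by simp
  have p0: "psi \<mu> \<kappa> \<sigma> \<rho> z = u * m 0" using e0 unfolding psid_def by simp
  have rec: "m (k+2) = s * m (k+1) + (\<nu> + real k) * m k" for k
    using Mo_rec[OF nu, of k s] unfolding m_def by simp
  have r2: "m 2 = s * m 1 + \<nu> * m 0" using rec[of 0] by (simp add: eval_nat_numeral)
  have r3: "m 3 = s * m 2 + (\<nu>+1) * m 1" using rec[of 1] by (simp add: eval_nat_numeral)
  have r4: "m 4 = s * m 3 + (\<nu>+2) * m 2" using rec[of 2] by (simp add: eval_nat_numeral)
  have r5: "m 5 = s * m 4 + (\<nu>+3) * m 3" using rec[of 3] by (simp add: eval_nat_numeral)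
  note g0 = gram_idx[OF nu, where b = s and i = 0, folded m_def]
  note g1 = gram_idx[OF nu, where b = s and i = 1, folded m_def]
  have fr: "(\<rho> + 2 * \<kappa>) / \<rho> = 1 + 2/\<nu>" unfolding \<nu>_def using k r by (simp add: field_simps)
  have n3: "(1::nat) + 2 = 3" and n2: "(1::nat) + 1 = 2" and n02: "(0::nat) + 2 = 2" and n01: "(0::nat) + 1 = 1"
    by simp_all
  have Deq: "DD \<mu> \<kappa> \<sigma> \<rho> \<beta> c y z = (u*m 0) * (A * ((L*u*m 1) * (L^3*u*m 3) - (L^2*u*m 2)\<^sup>2) + ((u*m 0) * (L^3*u*m 3) - (L*u*m 1) * (L^2*u*m 2)))"
    unfolding DD_def Qk_def Q0d_def A_def n3 n2 n02 n01 e0 e1 e2 e3 p0 ..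
  have Neq: "NN \<mu> \<kappa> \<sigma> \<rho> \<beta> c y z = ((u*m 0) * (L^2*u*m 2) - (L*u*m 1)\<^sup>2) * ((1 + 2/\<nu>) * (L*u*m 1) + A * (L^2*u*m 2) + (L*u*m 1))"
    unfolding NN_def Qk_def A_def fr n3 n2 n02 n01 e0 e1 e2 e3 ..
  show ?thesis unfolding Neq Deq
  proof (rule final_alg[OF nu L u r2 r3 r4 r5])
    show "m 0 > 0" using g0(1) by (simp add: m_def)
    show "m 1 > 0" using g1(1) by (simp add: m_def)
    show "m 0 * m 2 - (m 1)\<^sup>2 > 0" using g0(2) by (simp add: m_def)
    show "m 1 * m 3 - (m 2)\<^sup>2 > 0" using g1(2) by (simp add: m_def eval_nat_numeral)
    show "(m 0 * m 2 - (m 1)\<^sup>2) * (m 0 * m 4 - (m 2)\<^sup>2) - (m 0 * m 3 - m 1 * m 2)\<^sup>2 > 0"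
      using g0(3) by (simp add: m_def eval_nat_numeral)
    show "(m 1 * m 3 - (m 2)\<^sup>2) * (m 1 * m 5 - (m 3)\<^sup>2) - (m 1 * m 4 - m 2 * m 3)\<^sup>2 > 0"
      using g1(3) by (simp add: m_def eval_nat_numeral)
    show "(u*m 0) * (A * ((L*u*m 1) * (L^3*u*m 3) - (L^2*u*m 2)\<^sup>2) + ((u*m 0) * (L^3*u*m 3) - (L*u*m 1) * (L^2*u*m 2))) \<ge> 0"
      using assms(6) unfolding Deq .
  qed
qed

end
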